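(* Let $A,B$ be $C^*$-algebras, $\phi:A\to\mathbf B(\mathcal H)$ and $\psi:B\to\mathbf B(\mathcal K)$ completely positive linear maps with minimal Stinespring representations $(\pi_\phi,V_\phi,\mathcal H_\phi)$ and $(\pi_\psi,V_\psi,\mathcal H_\psi)$. Suppose $X$ is an $A$–$B$-equivalence bimodule and $\pi_X:X\to\mathbf B(\mathcal H_\psi,\mathcal H_\phi)$ is a linear map such that $(\pi_\phi,\pi_X,\pi_\psi)$ is a representation of $X$ on $(\mathcal H_\phi,\mathcal H_\psi)$. Let $L_X=\left\{\begin{bmatrix} a & x\\ \widetilde y & b\end{bmatrix}: a\in A,b\in B,x,y\in X\right\}$ be the linking $C^*$-algebra of $X$, let $\rho$ be the representation of $L_X$ on $\mathcal H_\phi\oplus\mathcal H_\psi$ given by $\rho\left(\begin{bmatrix} a & x\\ \widetilde y & b\end{bmatrix}\right)=\begin{bmatrix}\pi_\phi(a) & \pi_X(x)\\ \pi_X(y)^* & \pi_\psi(b)\end{bmatrix}$, and let $\tau:L_X\to\mathbf B(\mathcal H\oplus\mathcal K)$ be $\tau(l)=(V_\phi\oplus V_\psi)^*\rho(l)(V_\phi\oplus V_\psi)$. Then $(\rho, V_\phi\oplus V_\psi,\mathcal H_\phi\oplus\mathcal H_\psi)$ is a minimal Stinespring representation for $\tau$.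
   Context: For an $A$–$B$-equivalence bimodule $X$, $\widetilde X$ denotes the dual $B$–$A$-bimodule with $\widetilde y$ the element corresponding to $y\in X$. A representation of $X$ on $(\mathcal H,\mathcal K)$ is a triple $(\pi_A,\pi_X,\pi_B)$ with $\pi_A,\pi_B$ non-degenerate representations of $A$ on $\mathcal H$, $B$ on $\mathcal K$, and $\pi_X:X\to\mathbf B(\mathcal K,\mathcal H)$ linear with $\pi_X(x)\pi_X(y)^*=\pi_A({}_A\langle x,y\rangle)$, $\pi_X(x)^*\pi_X(y)=\pi_B(\langle x,y\rangle_B)$, $\pi_X(a\cdot x\cdot b)=\pi_A(a)\pi_X(x)\pi_B(b)$. A minimal Stinespring representation of a completely positive $\phi:A\to\mathbf B(\mathcal H)$ is $(\pi_\phi,V_\phi,\mathcal H_\phi)$ with $\pi_\phi$ a representation of $A$ on $\mathcal H_\phi$, $V_\phi\in\mathbf B(\mathcal H,\mathcal H_\phi)$, $\phi(a)=V_\phi^*\pi_\phi(a)V_\phi$ for all $a$, and $\overline{\pi_\phi(A)V_\phi\mathcal H}=\mathcal H_\phi$. *)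

theory Defs
  imports "HOL-Analysis.Analysis"
begin

class complex_vector = real_vector +
  fixes scaleC :: "complex \<Rightarrow> 'a \<Rightarrow> 'a"
  assumes scaleC_add_right: "scaleC c (x + y) = scaleC c x + scaleC c y"
    and scaleC_add_left: "scaleC (c + d) x = scaleC c x + scaleC d x"
    and scaleC_scaleC: "scaleC c (scaleC d x) = scaleC (c * d) x"
    and scaleC_of_real: "scaleC (complex_of_real r) x = scaleR r x"

text \<open>A complex Hilbert space: a complete real inner product space carrying a complex
  structure for which multiplication by i is isometric; the complex inner product is
  recovered as cinner below (linear in the first, conjugate linear in the second argument),
  and its real part is the real inner product, so norm and topology are the library ones.\<close>
class complex_hilbert = complex_vector + real_inner + complete_space +
  assumes inner_scaleC_i: "inner (scaleC \<i> x) (scaleC \<i> y) = inner x y"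

definition cinner :: "'h::complex_hilbert \<Rightarrow> 'h \<Rightarrow> complex" where
  "cinner x y = Complex (inner x y) (- inner (scaleC \<i> x) y)"

instantiation prod :: (complex_vector, complex_vector) complex_vector
begin
definition scaleC_prod_def: "scaleC c x = (scaleC c (fst x), scaleC c (snd x))"
instance
  by standard (auto simp: scaleC_prod_def scaleC_add_right scaleC_add_left
      scaleC_scaleC scaleC_of_real scaleR_prod_def)
end

instance prod :: (complex_hilbert, complex_hilbert) complex_hilbert
  by standard (simp add: inner_prod_def scaleC_prod_def inner_scaleC_i)

definition cspan :: "'a::complex_vector set \<Rightarrow> 'a set" where
  "cspan S = span {scaleC c v | c v. v \<in> S}"

definition cblin :: "('h::complex_hilbert \<Rightarrow> 'k::complex_hilbert) \<Rightarrow> bool" where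
  "cblin T \<longleftrightarrow> bounded_linear T \<and> (\<forall>c x. T (scaleC c x) = scaleC c (T x))"

definition adj :: "('h::complex_hilbert \<Rightarrow> 'k::complex_hilbert) \<Rightarrow> ('k \<Rightarrow> 'h)" where
  "adj T = (SOME S. \<forall>x y. cinner (T x) y = cinner x (S y))"

class cstar = complex_vector + real_normed_algebra + complete_space +
  fixes sstar :: "'a \<Rightarrow> 'a"
  assumes sstar_sstar: "sstar (sstar x) = x"
    and sstar_add: "sstar (x + y) = sstar x + sstar y"
    and sstar_scaleC: "sstar (scaleC c x) = scaleC (cnj c) (sstar x)"
    and sstar_mult: "sstar (x * y) = sstar y * sstar x"
    and cstar_identity: "norm (sstar x * x) = norm x * norm x"
    and scaleC_mult_left: "scaleC c (x * y) = scaleC c x * y"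
    and scaleC_mult_right: "scaleC c (x * y) = x * scaleC c y"
    and norm_scaleC: "norm (scaleC c x) = cmod c * norm x"

definition cpositive :: "'a::cstar \<Rightarrow> bool" where
  "cpositive b \<longleftrightarrow> (\<exists>c. b = sstar c * c)"

definition srep ::
  "('l \<Rightarrow> 'l \<Rightarrow> 'l) \<Rightarrow> (complex \<Rightarrow> 'l \<Rightarrow> 'l) \<Rightarrow> ('l \<Rightarrow> 'l \<Rightarrow> 'l) \<Rightarrow> ('l \<Rightarrow> 'l)
    \<Rightarrow> ('l \<Rightarrow> 'h::complex_hilbert \<Rightarrow> 'h) \<Rightarrow> bool" where
  "srep add scal mul st \<pi> \<longleftrightarrow>
     (\<forall>l. cblin (\<pi> l)) \<and>
     (\<forall>l m. \<pi> (add l m) = (\<lambda>h. \<pi> l h + \<pi> m h)) \<and>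
     (\<forall>c l. \<pi> (scal c l) = (\<lambda>h. scaleC c (\<pi> l h))) \<and>
     (\<forall>l m. \<pi> (mul l m) = \<pi> l \<circ> \<pi> m) \<and>
     (\<forall>l. \<pi> (st l) = adj (\<pi> l))"

definition is_rep :: "('a::cstar \<Rightarrow> 'h::complex_hilbert \<Rightarrow> 'h) \<Rightarrow> bool" where
  "is_rep \<pi> \<longleftrightarrow> srep (+) scaleC (*) sstar \<pi>"

definition nondegenerate :: "('a::cstar \<Rightarrow> 'h::complex_hilbert \<Rightarrow> 'h) \<Rightarrow> bool" where
  "nondegenerate \<pi> \<longleftrightarrow> closure (cspan {\<pi> a h | a h. True}) = UNIV"

definition completely_positive :: "('a::cstar \<Rightarrow> 'h::complex_hilbert \<Rightarrow> 'h) \<Rightarrow> bool" where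
  "completely_positive \<phi> \<longleftrightarrow>
     (\<forall>a. cblin (\<phi> a)) \<and>
     (\<forall>a b. \<phi> (a + b) = (\<lambda>h. \<phi> a h + \<phi> b h)) \<and>
     (\<forall>c a. \<phi> (scaleC c a) = (\<lambda>h. scaleC c (\<phi> a h))) \<and>
     (\<forall>(n::nat) (c :: nat \<Rightarrow> nat \<Rightarrow> 'a) (h :: nat \<Rightarrow> 'h).
        let s = (\<Sum>i<n. \<Sum>j<n. cinner (\<phi> (\<Sum>k<n. sstar (c k i) * c k j) (h j)) (h i))
        in Im s = 0 \<and> Re s \<ge> 0)"

definition min_stinespring_ops ::
  "('l \<Rightarrow> 'l \<Rightarrow> 'l) \<Rightarrow> (complex \<Rightarrow> 'l \<Rightarrow> 'l) \<Rightarrow> ('l \<Rightarrow> 'l \<Rightarrow> 'l) \<Rightarrow> ('l \<Rightarrow> 'l)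
    \<Rightarrow> ('l \<Rightarrow> 'h::complex_hilbert \<Rightarrow> 'h) \<Rightarrow> ('l \<Rightarrow> 'p::complex_hilbert \<Rightarrow> 'p)
    \<Rightarrow> ('h \<Rightarrow> 'p) \<Rightarrow> bool" where
  "min_stinespring_ops add scal mul st \<phi> \<pi> V \<longleftrightarrow>
     srep add scal mul st \<pi> \<and> cblin V \<and>
     (\<forall>l. \<phi> l = adj V \<circ> \<pi> l \<circ> V) \<and>
     closure (cspan {\<pi> l (V h) | l h. True}) = UNIV"

definition min_stinespring ::
  "('a::cstar \<Rightarrow> 'h::complex_hilbert \<Rightarrow> 'h) \<Rightarrow> ('a \<Rightarrow> 'p::complex_hilbert \<Rightarrow> 'p)
    \<Rightarrow> ('h \<Rightarrow> 'p) \<Rightarrow> bool" where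
  "min_stinespring \<phi> \<pi> V \<longleftrightarrow> min_stinespring_ops (+) scaleC (*) sstar \<phi> \<pi> V"

definition complete_wrt :: "('x::real_vector \<Rightarrow> real) \<Rightarrow> bool" where
  "complete_wrt nm \<longleftrightarrow>
     (\<forall>s::nat \<Rightarrow> 'x. (\<forall>e>0. \<exists>N. \<forall>m\<ge>N. \<forall>n\<ge>N. nm (s m - s n) < e) \<longrightarrow>
        (\<exists>x. \<forall>e>0. \<exists>N. \<forall>n\<ge>N. nm (s n - x) < e))"

text \<open>X (the whole type 'x) with left A-action lact, right B-action ract, A-valued inner
  product lip (linear in the first variable) and B-valued inner product rip (linear in the
  second variable) is an A-B-equivalence bimodule (Raeburn-Williams, Def. 3.1): a full left
  Hilbert A-module, a full right Hilbert B-module, with the compatibility conditions.\<close>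
definition equivalence_bimodule ::
  "('a::cstar \<Rightarrow> 'x::complex_vector \<Rightarrow> 'x) \<Rightarrow> ('x \<Rightarrow> 'b::cstar \<Rightarrow> 'x)
    \<Rightarrow> ('x \<Rightarrow> 'x \<Rightarrow> 'a) \<Rightarrow> ('x \<Rightarrow> 'x \<Rightarrow> 'b) \<Rightarrow> bool" where
  "equivalence_bimodule lact ract lip rip \<longleftrightarrow>
     \<comment> \<open>right B-module\<close>
     (\<forall>x y b. ract (x + y) b = ract x b + ract y b) \<and>
     (\<forall>x b c. ract x (b + c) = ract x b + ract x c) \<and>
     (\<forall>x b c. ract x (b * c) = ract (ract x b) c) \<and>
     (\<forall>z x b. scaleC z (ract x b) = ract (scaleC z x) b) \<and>
     (\<forall>z x b. scaleC z (ract x b) = ract x (scaleC z b)) \<and>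
     \<comment> \<open>left A-module\<close>
     (\<forall>a x y. lact a (x + y) = lact a x + lact a y) \<and>
     (\<forall>a c x. lact (a + c) x = lact a x + lact c x) \<and>
     (\<forall>a c x. lact (a * c) x = lact a (lact c x)) \<and>
     (\<forall>z a x. scaleC z (lact a x) = lact a (scaleC z x)) \<and>
     (\<forall>z a x. scaleC z (lact a x) = lact (scaleC z a) x) \<and>
     \<comment> \<open>bimodule\<close>
     (\<forall>a x b. lact a (ract x b) = ract (lact a x) b) \<and>
     \<comment> \<open>right B-valued inner product\<close>
     (\<forall>x y z. rip x (y + z) = rip x y + rip x z) \<and>
     (\<forall>x y c. rip x (scaleC c y) = scaleC c (rip x y)) \<and>
     (\<forall>x y b. rip x (ract y b) = rip x y * b) \<and>
     (\<forall>x y. rip y x = sstar (rip x y)) \<and>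
     (\<forall>x. cpositive (rip x x)) \<and>
     (\<forall>x. rip x x = 0 \<longrightarrow> x = 0) \<and>
     complete_wrt (\<lambda>x. sqrt (norm (rip x x))) \<and>
     closure (cspan {rip x y | x y. True}) = UNIV \<and>
     \<comment> \<open>left A-valued inner product\<close>
     (\<forall>x y z. lip (x + y) z = lip x z + lip y z) \<and>
     (\<forall>x y c. lip (scaleC c x) y = scaleC c (lip x y)) \<and>
     (\<forall>a x y. lip (lact a x) y = a * lip x y) \<and>
     (\<forall>x y. lip y x = sstar (lip x y)) \<and>
     (\<forall>x. cpositive (lip x x)) \<and>
     (\<forall>x. lip x x = 0 \<longrightarrow> x = 0) \<and>
     complete_wrt (\<lambda>x. sqrt (norm (lip x x))) \<and>
     closure (cspan {lip x y | x y. True}) = UNIV \<and>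
     \<comment> \<open>compatibility\<close>
     (\<forall>x y z. lact (lip x y) z = ract x (rip y z)) \<and>
     (\<forall>a x y. rip (lact a x) y = rip x (lact (sstar a) y)) \<and>
     (\<forall>x b y. lip (ract x b) y = lip x (ract y (sstar b)))"

definition bimodule_rep ::
  "('a::cstar \<Rightarrow> 'x::complex_vector \<Rightarrow> 'x) \<Rightarrow> ('x \<Rightarrow> 'b::cstar \<Rightarrow> 'x)
    \<Rightarrow> ('x \<Rightarrow> 'x \<Rightarrow> 'a) \<Rightarrow> ('x \<Rightarrow> 'x \<Rightarrow> 'b)
    \<Rightarrow> ('a \<Rightarrow> 'h::complex_hilbert \<Rightarrow> 'h) \<Rightarrow> ('x \<Rightarrow> 'k::complex_hilbert \<Rightarrow> 'h)
    \<Rightarrow> ('b \<Rightarrow> 'k \<Rightarrow> 'k) \<Rightarrow> bool" where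
  "bimodule_rep lact ract lip rip piA piX piB \<longleftrightarrow>
     is_rep piA \<and> nondegenerate piA \<and> is_rep piB \<and> nondegenerate piB \<and>
     (\<forall>x. cblin (piX x)) \<and>
     (\<forall>x y. piX (x + y) = (\<lambda>k. piX x k + piX y k)) \<and>
     (\<forall>c x. piX (scaleC c x) = (\<lambda>k. scaleC c (piX x k))) \<and>
     (\<forall>x y. piX x \<circ> adj (piX y) = piA (lip x y)) \<and>
     (\<forall>x y. adj (piX x) \<circ> piX y = piB (rip x y)) \<and>
     (\<forall>a x b. piX (lact a (ract x b)) = piA a \<circ> piX x \<circ> piB b)"

text \<open>An element (a, x, y, b) represents the matrix [a, x; y~, b] of the linking algebra L_X,
  where y~ is the element of the dual module corresponding to y.  Note c . y~ = (cnj c . y)~,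
  y1~ . a = (a* . y1)~, b . y2~ = (y2 . b*)~, x1 . y2~ = lip x1 y2, y1~ . x2 = rip y1 x2,
  and [a, x; y~, b]* = [a*, y; x~, b*].\<close>
type_synonym ('a, 'x, 'b) linking = "'a \<times> 'x \<times> 'x \<times> 'b"

definition link_add :: "('a::cstar, 'x::complex_vector, 'b::cstar) linking \<Rightarrow> ('a, 'x, 'b) linking \<Rightarrow> ('a, 'x, 'b) linking" where
  "link_add l m = (case l of (a1, x1, y1, b1) \<Rightarrow> case m of (a2, x2, y2, b2) \<Rightarrow>
      (a1 + a2, x1 + x2, y1 + y2, b1 + b2))"

definition link_scal :: "complex \<Rightarrow> ('a::cstar, 'x::complex_vector, 'b::cstar) linking \<Rightarrow> ('a, 'x, 'b) linking" where
  "link_scal c l = (case l of (a, x, y, b) \<Rightarrow>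
      (scaleC c a, scaleC c x, scaleC (cnj c) y, scaleC c b))"

definition link_mult ::
  "('a::cstar \<Rightarrow> 'x::complex_vector \<Rightarrow> 'x) \<Rightarrow> ('x \<Rightarrow> 'b::cstar \<Rightarrow> 'x)
    \<Rightarrow> ('x \<Rightarrow> 'x \<Rightarrow> 'a) \<Rightarrow> ('x \<Rightarrow> 'x \<Rightarrow> 'b)
    \<Rightarrow> ('a, 'x, 'b) linking \<Rightarrow> ('a, 'x, 'b) linking \<Rightarrow> ('a, 'x, 'b) linking" where
  "link_mult lact ract lip rip l m = (case l of (a1, x1, y1, b1) \<Rightarrow> case m of (a2, x2, y2, b2) \<Rightarrow>
      (a1 * a2 + lip x1 y2,
       lact a1 x2 + ract x1 b2,
       lact (sstar a2) y1 + ract y2 (sstar b1),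
       rip y1 x2 + b1 * b2))"

definition link_star :: "('a::cstar, 'x::complex_vector, 'b::cstar) linking \<Rightarrow> ('a, 'x, 'b) linking" where
  "link_star l = (case l of (a, x, y, b) \<Rightarrow> (sstar a, y, x, sstar b))"

end

theory Submission
  imports Defs
begin


lemma riesz:
  fixes f :: "'a::{real_inner,complete_space} \<Rightarrow> real"
  assumes bl: "bounded_linear f"
  shows "\<exists>z. \<forall>x. f x = inner z x"
proof (cases "\<forall>x. f x = 0")
  case True then show ?thesis by (intro exI[of _ 0]) simp
next
  case False
  then obtain x1 where x1: "f x1 \<noteq> 0" by blast
  interpret f: bounded_linear f by fact
  define C where "C = {x. f x = 1}"
  have x1C: "x1 /\<^sub>R f x1 \<in> C" using x1 by (simp add: C_def f.scaleR)
  define d where "d = Inf (norm ` C)"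
  have bdd: "bdd_below (norm ` C)" by (rule bdd_belowI[of _ 0]) auto
  have d_le: "d \<le> norm y" if "y \<in> C" for y unfolding d_def using bdd that by (simp add: cInf_lower)
  have d0: "0 \<le> d" unfolding d_def using x1C by (intro cInf_greatest) auto
  have "\<exists>y\<in>C. (norm y)^2 < d^2 + 1/Suc n" for n
  proof -
    have "d < sqrt (d^2 + 1/Suc n)" using d0 by (simp add: real_less_rsqrt)
    then obtain y where y: "y \<in> C" "norm y < sqrt (d^2 + 1/Suc n)"
      using cInf_lessD[of "norm ` C"] x1C unfolding d_def by auto
    have "(norm y)^2 < (sqrt (d^2 + 1/Suc n))^2"
      using y(2) by (intro power_strict_mono) auto
    also have "\<dots> = d^2 + 1/Suc n" by (simp add: add_nonneg_nonneg)
    finally show ?thesis using y(1) by blast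
  qed
  then obtain s where sC: "\<And>n. s n \<in> C" and sn: "\<And>n. (norm (s n))^2 < d^2 + 1/Suc n" by metis
  have par: "norm (s m - s n)^2 \<le> 2/Suc m + 2/Suc n" for m n
  proof -
    have mid: "(1/2) *\<^sub>R (s m + s n) \<in> C" using sC[of m] sC[of n] by (simp add: C_def f.add f.scaleR)
    have "d \<le> norm ((1/2) *\<^sub>R (s m + s n))" using d_le mid .
    hence "2*d \<le> norm (s m + s n)" by simp
    hence "(2*d)^2 \<le> norm (s m + s n)^2" using d0 by (intro power_mono) auto
    moreover have "norm (s m + s n)^2 + norm (s m - s n)^2 = 2*norm(s m)^2 + 2*norm(s n)^2"
      by (simp add: power2_norm_eq_inner inner_add inner_diff inner_commute)
    ultimately show ?thesis using sn[of m] sn[of n] by (simp add: power_mult_distrib)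
  qed
  have "Cauchy s"
  proof (rule CauchyI)
    fix e :: real assume e: "0 < e"
    obtain N :: nat where N0: "4/e^2 < real N" using reals_Archimedean2 by blast
    have N: "4/e^2 < real (Suc N)" using N0 by linarith
    have N': "4 / Suc N < e^2" using N e by (simp add: divide_less_eq mult.commute)
    show "\<exists>M. \<forall>m\<ge>M. \<forall>n\<ge>M. norm (s m - s n) < e"
    proof (intro exI allI impI)
      fix m n assume mn: "N \<le> m" "N \<le> n"
      have "2/Suc m \<le> 2/Suc N" "2/Suc n \<le> 2/Suc N" using mn by (auto intro!: divide_left_mono)
      hence "norm (s m - s n)^2 < e^2" using par[of m n] N' by simp
      thus "norm (s m - s n) < e" using e by (simp add: power_less_imp_less_base)
    qed
  qed
  then obtain z0 where lim: "s \<longlonglongrightarrow> z0" using Cauchy_convergent_iff convergent_def by blast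
  have "(\<lambda>n. f (s n)) \<longlonglongrightarrow> f z0" by (rule f.tendsto[OF lim])
  moreover have "(\<lambda>n. f (s n)) = (\<lambda>n. 1)" using sC by (simp add: C_def)
  ultimately have fz0: "f z0 = 1" using LIMSEQ_unique tendsto_const by metis
  have l1: "(\<lambda>n. norm (s n)^2) \<longlonglongrightarrow> norm z0^2" by (intro tendsto_intros lim)
  have l2: "(\<lambda>n. d^2 + inverse (real (Suc n))) \<longlonglongrightarrow> d^2 + 0"
    by (intro tendsto_intros LIMSEQ_inverse_real_of_nat)
  have nz0: "norm z0^2 \<le> d^2"
    using LIMSEQ_le[OF l1 l2] sn by (simp add: less_imp_le inverse_eq_divide)
  have mn: "norm z0^2 \<le> norm y^2" if "y \<in> C" for y
    using nz0 d_le[OF that] d0 power_mono[of d "norm y" 2] by linarith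
  have orth: "inner z0 n = 0" if fn: "f n = 0" for n
  proof -
    define a where "a = inner z0 n"
    define b where "b = inner n n"
    have b0: "0 \<le> b" by (simp add: b_def)
    define t where "t = - a / (b+1)"
    have "z0 + t *\<^sub>R n \<in> C" using fz0 fn by (simp add: C_def f.add f.scaleR)
    hence "norm z0^2 \<le> norm (z0 + t *\<^sub>R n)^2" by (rule mn)
    also have "\<dots> = norm z0^2 + 2*t*a + t^2*b"
      unfolding power2_norm_eq_inner
      by (simp add: inner_add a_def b_def inner_commute power2_eq_square algebra_simps)
    finally have "0 \<le> 2*t*a + t^2*b" by simp
    also have "2*t*a + t^2*b = - (a^2 * (b+2)) / (b+1)^2"
    proof -
      have bp: "b + 1 \<noteq> 0" using b0 by linarith
      have tc: "t * (b+1) = -a" unfolding t_def using bp by simp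
      have "(2*t*a + t^2*b) * (b+1)^2 = 2*a*(t*(b+1))*(b+1) + (t*(b+1))^2*b"
        by (simp add: power2_eq_square algebra_simps)
      also have "\<dots> = - (a^2 * (b+2))" unfolding tc by (simp add: power2_eq_square algebra_simps)
      finally have e: "(2*t*a + t^2*b) * (b+1)^2 = - (a^2 * (b+2))" .
      have "(b+1)^2 \<noteq> 0" using bp by simp
      then show ?thesis using e by (metis nonzero_mult_div_cancel_right)
    qed
    finally have "a^2 * (b+2) \<le> 0" using b0 by (simp add: divide_le_0_iff)
    hence "a^2 \<le> 0" using b0 by (simp add: mult_le_0_iff)
    thus ?thesis by (simp add: a_def)
  qed
  have z0nz: "z0 \<noteq> 0" using fz0 by auto
  show ?thesis
  proof (intro exI allI)
    fix x
    have "f (x - f x *\<^sub>R z0) = 0" by (simp add: f.diff f.scaleR fz0)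
    hence "inner z0 (x - f x *\<^sub>R z0) = 0" by (rule orth)
    hence "inner z0 x = f x * inner z0 z0" by (simp add: inner_diff_right)
    thus "f x = inner ((1/inner z0 z0) *\<^sub>R z0) x" using z0nz by simp
  qed
qed



lemma scaleC_decomp: "scaleC c v = Re c *\<^sub>R v + Im c *\<^sub>R scaleC \<i> (v::'a::complex_vector)"
proof -
  have c: "c = complex_of_real (Re c) + complex_of_real (Im c) * \<i>" by (simp add: complex_eq_iff)
  have "scaleC c v = scaleC (complex_of_real (Re c)) v + scaleC (complex_of_real (Im c) * \<i>) v"
    by (subst c) (rule scaleC_add_left)
  also have "\<dots> = Re c *\<^sub>R v + Im c *\<^sub>R scaleC \<i> v"
    by (simp add: scaleC_of_real flip: scaleC_scaleC)
  finally show ?thesis .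
qed

lemma scaleC_ii: "scaleC \<i> (scaleC \<i> v) = - (v::'a::complex_vector)"
proof -
  have "scaleC \<i> (scaleC \<i> v) = scaleC (complex_of_real (-1)) v" by (simp add: scaleC_scaleC)
  also have "\<dots> = (-1) *\<^sub>R v" by (rule scaleC_of_real)
  also have "\<dots> = - v" by simp
  finally show ?thesis .
qed

lemma inner_i_right: "inner u (scaleC \<i> v) = - inner (scaleC \<i> u) (v::'a::complex_hilbert)"
proof -
  have "inner (scaleC \<i> u) (scaleC \<i> (scaleC \<i> v)) = inner u (scaleC \<i> v)" by (rule inner_scaleC_i)
  thus ?thesis by (simp add: scaleC_ii)
qed

lemma inner_scaleC_left: "inner (scaleC c u) v = inner u (scaleC (cnj c) (v::'a::complex_hilbert))"
  by (simp add: scaleC_decomp[of c] scaleC_decomp[of "cnj c"] inner_add_left inner_add_right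
      inner_diff_right inner_i_right)

lemma inner_scaleC_right: "inner u (scaleC c v) = inner (scaleC (cnj c) u) (v::'a::complex_hilbert)"
  using inner_scaleC_left[of "cnj c" u v] by simp

lemma inner_ext: "(\<And>x. inner x u = inner x v) \<Longrightarrow> u = (v::'a::real_inner)"
proof -
  assume h: "\<And>x. inner x u = inner x v"
  have "inner (u - v) (u - v) = 0" using h[of "u - v"] by (simp add: inner_diff_right)
  thus ?thesis by simp
qed

lemma cblinD:
  assumes "cblin T"
  shows "T (x + y) = T x + T y" "T (r *\<^sub>R x) = r *\<^sub>R T x" "T (scaleC c x) = scaleC c (T x)"
    "T (x - y) = T x - T y" "T 0 = 0" "T (- x) = - T x" "bounded_linear T"
  using assms unfolding cblin_def
  by (auto simp: linear_simps)

lemma adj_ex: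
  fixes T :: "'h::complex_hilbert \<Rightarrow> 'k::complex_hilbert"
  assumes "cblin T"
  shows "\<exists>S. \<forall>x y. inner (T x) y = inner x (S y)"
proof -
  have bl: "bounded_linear T" using assms by (simp add: cblin_def)
  have "\<forall>y. \<exists>z. \<forall>x. inner (T x) y = inner z x"
  proof
    fix y
    have "bounded_linear (\<lambda>x. inner (T x) y)"
      using bounded_linear_compose[OF bounded_linear_inner_left bl] .
    thus "\<exists>z. \<forall>x. inner (T x) y = inner z x" by (rule riesz)
  qed
  then obtain S where "\<forall>y x. inner (T x) y = inner (S y) x" by metis
  thus ?thesis by (metis inner_commute)
qed

lemma adj_prop:
  fixes T :: "'h::complex_hilbert \<Rightarrow> 'k::complex_hilbert"
  assumes T: "cblin T"
  shows "inner (T x) y = inner x (adj T y)"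
proof -
  obtain S where S: "\<forall>x y. inner (T x) y = inner x (S y)" using adj_ex[OF T] by blast
  have "inner (scaleC \<i> (T x)) y = inner (scaleC \<i> x) (S y)" for x y
    using S cblinD(3)[OF T, of \<i>] by metis
  hence "\<forall>x y. cinner (T x) y = cinner x (S y)"
    using S by (simp add: cinner_def)
  hence "\<forall>x y. cinner (T x) y = cinner x (adj T y)"
    unfolding adj_def by (rule someI[where P = "\<lambda>S. \<forall>x y. cinner (T x) y = cinner x (S y)"])
  hence "Re (cinner (T x) y) = Re (cinner x (adj T y))" by simp
  thus ?thesis by (simp add: cinner_def)
qed

lemma adj_unique:
  fixes T :: "'h::complex_hilbert \<Rightarrow> 'k::complex_hilbert"
  assumes T: "cblin T" and S: "\<And>x y. inner (T x) y = inner x (S y)"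
  shows "adj T = S"
proof
  fix y show "adj T y = S y"
    by (rule inner_ext) (simp add: adj_prop[OF T, symmetric] S)
qed

lemma cblin_adj:
  fixes T :: "'h::complex_hilbert \<Rightarrow> 'k::complex_hilbert"
  assumes T: "cblin T"
  shows "cblin (adj T)"
proof -
  obtain K where K0: "K > 0" and K: "\<And>x. norm (T x) \<le> norm x * K"
    using bounded_linear.pos_bounded[OF cblinD(7)[OF T]] by blast
  have bd: "norm (adj T y) \<le> norm y * K" for y
  proof (cases "adj T y = 0")
    case True then show ?thesis using K0 by simp
  next
    case False
    have "norm (adj T y) * norm (adj T y) = inner (adj T y) (adj T y)"
      by (simp add: power2_norm_eq_inner[symmetric] power2_eq_square)
    also have "\<dots> = inner (T (adj T y)) y" by (simp add: adj_prop[OF T])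
    also have "\<dots> \<le> norm (T (adj T y)) * norm y" by (rule norm_cauchy_schwarz)
    also have "\<dots> \<le> norm (adj T y) * K * norm y" using K by (simp add: mult_right_mono)
    finally have "norm (adj T y) * norm (adj T y) \<le> norm (adj T y) * (norm y * K)"
      by (simp add: algebra_simps)
    thus ?thesis using False by simp
  qed
  have add: "adj T (x + y) = adj T x + adj T y" for x y
    by (rule inner_ext) (simp add: adj_prop[OF T, symmetric] inner_add_right)
  have sc: "adj T (r *\<^sub>R x) = r *\<^sub>R adj T x" for r x
    by (rule inner_ext) (simp add: adj_prop[OF T, symmetric])
  have scc: "adj T (scaleC c x) = scaleC c (adj T x)" for c x
    by (rule inner_ext) (simp add: adj_prop[OF T, symmetric] inner_scaleC_right cblinD(3)[OF T])
  show ?thesis unfolding cblin_def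
    using bounded_linear_intro[of "adj T", OF add sc bd] scc by blast
qed

lemma adj_adj:
  fixes T :: "'h::complex_hilbert \<Rightarrow> 'k::complex_hilbert"
  assumes T: "cblin T"
  shows "adj (adj T) = T"
  by (rule adj_unique[OF cblin_adj[OF T]]) (metis adj_prop[OF T] inner_commute)

lemma cblin_comp:
  assumes "cblin T" "cblin U" shows "cblin (\<lambda>x. T (U x))"
  using assms unfolding cblin_def by (auto intro: bounded_linear_compose)

lemma cblin_comp':
  assumes "cblin T" "cblin U" shows "cblin (T \<circ> U)"
  using cblin_comp[OF assms] by (simp add: comp_def)

lemma cblin_add:
  assumes "cblin T" "cblin U" shows "cblin (\<lambda>x. T x + U x)"
  using assms unfolding cblin_def by (auto intro: bounded_linear_add simp: scaleC_add_right)

lemma cblin_diff: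
  assumes T: "cblin T" and U: "cblin U" shows "cblin (\<lambda>x. T x - U x)"
proof -
  have d: "scaleC c (a - b) = scaleC c a - scaleC c (b::'z::complex_vector)" for c a b
    by (metis add_diff_cancel scaleC_add_right diff_add_cancel)
  show ?thesis using assms unfolding cblin_def by (auto intro: bounded_linear_sub simp: d)
qed

lemma adj_comp:
  fixes T :: "'k::complex_hilbert \<Rightarrow> 'l::complex_hilbert" and U :: "'h::complex_hilbert \<Rightarrow> 'k"
  assumes T: "cblin T" and U: "cblin U"
  shows "adj (\<lambda>x. T (U x)) = (\<lambda>y. adj U (adj T y))"
  by (rule adj_unique[OF cblin_comp[OF T U]]) (simp add: adj_prop[OF T] adj_prop[OF U])

lemma adj_add:
  fixes T U :: "'h::complex_hilbert \<Rightarrow> 'k::complex_hilbert"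
  assumes T: "cblin T" and U: "cblin U"
  shows "adj (\<lambda>x. T x + U x) = (\<lambda>y. adj T y + adj U y)"
  by (rule adj_unique[OF cblin_add[OF T U]]) (simp add: adj_prop[OF T] adj_prop[OF U] inner_add)

lemma adj_diff:
  fixes T U :: "'h::complex_hilbert \<Rightarrow> 'k::complex_hilbert"
  assumes T: "cblin T" and U: "cblin U"
  shows "adj (\<lambda>x. T x - U x) = (\<lambda>y. adj T y - adj U y)"
  by (rule adj_unique[OF cblin_diff[OF T U]]) (simp add: adj_prop[OF T] adj_prop[OF U] inner_diff)

lemma bl_scaleC: "bounded_linear (scaleC c :: 'a::complex_hilbert \<Rightarrow> 'a)"
  proof (rule bounded_linear_intro[where K = "cmod c"])
    fix x y :: 'a show "scaleC c (x + y) = scaleC c x + scaleC c y" by (rule scaleC_add_right)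
    fix r show "scaleC c (r *\<^sub>R x) = r *\<^sub>R scaleC c x"
      by (simp add: scaleC_of_real[symmetric] scaleC_scaleC mult.commute)
    have cc: "cnj c * c = complex_of_real ((cmod c)^2)"
      using cmod_power2[of c] by (simp add: complex_eq_iff power2_eq_square)
    have "norm (scaleC c x) ^2 = inner x (scaleC (cnj c * c) x)"
      by (simp add: power2_norm_eq_inner inner_scaleC_left scaleC_scaleC)
    also have "\<dots> = inner x ((cmod c)^2 *\<^sub>R x)" unfolding cc scaleC_of_real ..
    also have "\<dots> = (cmod c * norm x)^2"
      by (simp add: power_mult_distrib power2_norm_eq_inner)
    finally have "norm (scaleC c x) ^2 = (cmod c * norm x)^2" .
    thus "norm (scaleC c x) \<le> norm x * cmod c" by (simp add: power2_eq_iff_nonneg mult.commute)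
  qed

lemma cblin_scale:
  assumes T: "cblin T" shows "cblin (\<lambda>x. scaleC c (T x))"
proof -
  have "bounded_linear (\<lambda>x. scaleC c (T x))"
    using bounded_linear_compose[OF bl_scaleC cblinD(7)[OF T]] by (simp add: o_def)
  thus ?thesis using T unfolding cblin_def
    by (auto simp: scaleC_scaleC mult.commute)
qed

lemma adj_scale:
  fixes T :: "'h::complex_hilbert \<Rightarrow> 'k::complex_hilbert"
  assumes T: "cblin T"
  shows "adj (\<lambda>x. scaleC c (T x)) = (\<lambda>y. scaleC (cnj c) (adj T y))"
  by (rule adj_unique[OF cblin_scale[OF T]])
     (simp only: inner_scaleC_right complex_cnj_cnj adj_prop[OF T, symmetric] cblinD(3)[OF T])

lemma scaleC_zero_right: "scaleC c 0 = (0::'a::complex_vector)"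
proof -
  have "scaleC c (0 + 0) = scaleC c 0 + scaleC c (0::'a)" by (rule scaleC_add_right)
  thus ?thesis by simp
qed

lemma cblin_zero: "cblin (\<lambda>x. 0)"
  unfolding cblin_def by (simp add: scaleC_zero_right)

lemma adj_zero: "adj (\<lambda>x::'h::complex_hilbert. 0::'k::complex_hilbert) = (\<lambda>y. 0)"
  by (rule adj_unique[OF cblin_zero]) simp

lemma zero_from_adj_left:
  fixes E :: "'h::complex_hilbert \<Rightarrow> 'k::complex_hilbert"
  assumes E: "cblin E" and z: "\<And>k. adj E (E k) = 0"
  shows "E = (\<lambda>x. 0)"
proof
  fix k have "inner (E k) (E k) = 0" by (simp add: adj_prop[OF E] z)
  thus "E k = 0" by simp
qed

lemma zero_from_adj_right:
  fixes D :: "'h::complex_hilbert \<Rightarrow> 'k::complex_hilbert"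
  assumes D: "cblin D" and z: "\<And>h. D (adj D h) = 0"
  shows "D = (\<lambda>x. 0)"
proof -
  have "adj D = (\<lambda>x. 0)"
    by (rule zero_from_adj_left[OF cblin_adj[OF D]]) (simp add: adj_adj[OF D] z)
  hence "adj (adj D) = (\<lambda>x. 0)" by (simp add: adj_zero)
  thus ?thesis by (simp add: adj_adj[OF D])
qed



definition blk where
  "blk A B C D = (\<lambda>p. (A (fst p) + B (snd p), C (fst p) + D (snd p)))"

lemma cblin_blk:
  fixes A :: "'h::complex_hilbert \<Rightarrow> 'hp::complex_hilbert" and B :: "'k::complex_hilbert \<Rightarrow> 'hp"
    and C :: "'h \<Rightarrow> 'kp::complex_hilbert" and D :: "'k \<Rightarrow> 'kp"
  assumes A: "cblin A" and B: "cblin B" and C: "cblin C" and D: "cblin D"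
  shows "cblin (blk A B C D)"
proof -
  have bl: "bounded_linear (blk A B C D)" unfolding blk_def
    by (intro bounded_linear_Pair bounded_linear_add
        bounded_linear_compose[OF cblinD(7)[OF A] bounded_linear_fst]
        bounded_linear_compose[OF cblinD(7)[OF B] bounded_linear_snd]
        bounded_linear_compose[OF cblinD(7)[OF C] bounded_linear_fst]
        bounded_linear_compose[OF cblinD(7)[OF D] bounded_linear_snd])
  show ?thesis unfolding cblin_def using bl
    by (simp add: blk_def scaleC_prod_def cblinD(3)[OF A] cblinD(3)[OF B] cblinD(3)[OF C]
        cblinD(3)[OF D] scaleC_add_right)
qed

lemma adj_blk:
  fixes A :: "'h::complex_hilbert \<Rightarrow> 'hp::complex_hilbert" and B :: "'k::complex_hilbert \<Rightarrow> 'hp"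
    and C :: "'h \<Rightarrow> 'kp::complex_hilbert" and D :: "'k \<Rightarrow> 'kp"
  assumes A: "cblin A" and B: "cblin B" and C: "cblin C" and D: "cblin D"
  shows "adj (blk A B C D) = blk (adj A) (adj C) (adj B) (adj D)"
  by (rule adj_unique[OF cblin_blk[OF A B C D]])
     (simp add: blk_def inner_prod_def inner_add adj_prop[OF A] adj_prop[OF B] adj_prop[OF C]
       adj_prop[OF D])

lemma cspan_prod:
  fixes S :: "('a::complex_hilbert \<times> 'b::complex_hilbert) set"
  assumes s1: "(\<lambda>p. (p, 0)) ` S1 \<subseteq> S" and s2: "(\<lambda>q. (0, q)) ` S2 \<subseteq> S"
    and c1: "closure (cspan S1) = UNIV" and c2: "closure (cspan S2) = UNIV"
  shows "closure (cspan S) = UNIV"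
proof -
  have l1: "linear (\<lambda>p::'a. (p, 0::'b))" by (rule linearI) auto
  have l2: "linear (\<lambda>q::'b. (0::'a, q))" by (rule linearI) auto
  have sub1: "(\<lambda>p. (p, 0)) ` cspan S1 \<subseteq> cspan S"
    unfolding cspan_def span_linear_image[OF l1, symmetric]
  proof (rule span_mono)
    show "(\<lambda>p. (p, 0)) ` {scaleC c v |c v. v \<in> S1} \<subseteq> {scaleC c v |c v. v \<in> S}"
    proof
      fix z assume "z \<in> (\<lambda>p. (p, 0::'b)) ` {scaleC c v |c v. v \<in> S1}"
      then obtain c v where v: "v \<in> S1" and z: "z = (scaleC c v, 0)" by blast
      have "z = scaleC c (v, 0::'b)" using z by (simp add: scaleC_prod_def scaleC_zero_right)
      moreover have "(v, 0::'b) \<in> S" using s1 v by blast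
      ultimately show "z \<in> {scaleC c v |c v. v \<in> S}" by blast
    qed
  qed
  have sub2: "(\<lambda>q. (0, q)) ` cspan S2 \<subseteq> cspan S"
    unfolding cspan_def span_linear_image[OF l2, symmetric]
  proof (rule span_mono)
    show "(\<lambda>q. (0, q)) ` {scaleC c v |c v. v \<in> S2} \<subseteq> {scaleC c v |c v. v \<in> S}"
    proof
      fix z assume "z \<in> (\<lambda>q. (0::'a, q)) ` {scaleC c v |c v. v \<in> S2}"
      then obtain c v where v: "v \<in> S2" and z: "z = (0, scaleC c v)" by blast
      have "z = scaleC c (0::'a, v)" using z by (simp add: scaleC_prod_def scaleC_zero_right)
      moreover have "(0::'a, v) \<in> S" using s2 v by blast
      ultimately show "z \<in> {scaleC c v |c v. v \<in> S}" by blast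
    qed
  qed
  have "cspan S1 \<times> cspan S2 \<subseteq> cspan S"
  proof
    fix z assume "z \<in> cspan S1 \<times> cspan S2"
    then obtain p q where z: "z = (p, q)" "p \<in> cspan S1" "q \<in> cspan S2" by blast
    have "(p, 0) \<in> cspan S" "(0, q) \<in> cspan S" using sub1 sub2 z by auto
    hence "(p, 0) + (0, q) \<in> cspan S" unfolding cspan_def by (rule span_add)
    thus "z \<in> cspan S" using z by simp
  qed
  hence "closure (cspan S1 \<times> cspan S2) \<subseteq> closure (cspan S)" by (rule closure_mono)
  thus ?thesis using c1 c2 by (simp add: closure_Times top.extremum_unique)
qed



theorem lemma4p5:
  fixes \<phi> :: "'a::cstar \<Rightarrow> 'h::complex_hilbert \<Rightarrow> 'h"
    and \<psi> :: "'b::cstar \<Rightarrow> 'k::complex_hilbert \<Rightarrow> 'k"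
    and \<pi>\<phi> :: "'a \<Rightarrow> 'hp::complex_hilbert \<Rightarrow> 'hp" and V\<phi> :: "'h \<Rightarrow> 'hp"
    and \<pi>\<psi> :: "'b \<Rightarrow> 'kp::complex_hilbert \<Rightarrow> 'kp" and V\<psi> :: "'k \<Rightarrow> 'kp"
    and lact :: "'a \<Rightarrow> 'x::complex_vector \<Rightarrow> 'x" and ract :: "'x \<Rightarrow> 'b \<Rightarrow> 'x"
    and lip :: "'x \<Rightarrow> 'x \<Rightarrow> 'a" and rip :: "'x \<Rightarrow> 'x \<Rightarrow> 'b"
    and \<pi>X :: "'x \<Rightarrow> 'kp \<Rightarrow> 'hp"
    and \<rho> :: "('a, 'x, 'b) linking \<Rightarrow> 'hp \<times> 'kp \<Rightarrow> 'hp \<times> 'kp"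
    and W :: "'h \<times> 'k \<Rightarrow> 'hp \<times> 'kp"
    and \<tau> :: "('a, 'x, 'b) linking \<Rightarrow> 'h \<times> 'k \<Rightarrow> 'h \<times> 'k"
  assumes "completely_positive \<phi>" and "completely_positive \<psi>"
    and "min_stinespring \<phi> \<pi>\<phi> V\<phi>" and "min_stinespring \<psi> \<pi>\<psi> V\<psi>"
    and "equivalence_bimodule lact ract lip rip"
    and "bimodule_rep lact ract lip rip \<pi>\<phi> \<pi>X \<pi>\<psi>"
    and "\<And>a x y b hk. \<rho> (a, x, y, b) hk =
           (\<pi>\<phi> a (fst hk) + \<pi>X x (snd hk), adj (\<pi>X y) (fst hk) + \<pi>\<psi> b (snd hk))"
    and "\<And>hk. W hk = (V\<phi> (fst hk), V\<psi> (snd hk))"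
    and "\<And>l. \<tau> l = adj W \<circ> \<rho> l \<circ> W"
  shows "min_stinespring_ops link_add link_scal (link_mult lact ract lip rip) link_star \<tau> \<rho> W"
proof -
  from assms(3) have sA: "srep (+) scaleC (*) sstar \<pi>\<phi>" and VA: "cblin V\<phi>"
    and clA: "closure (cspan {\<pi>\<phi> a (V\<phi> h) | a h. True}) = UNIV"
    unfolding min_stinespring_def min_stinespring_ops_def by blast+
  from assms(4) have sB: "srep (+) scaleC (*) sstar \<pi>\<psi>" and VB: "cblin V\<psi>"
    and clB: "closure (cspan {\<pi>\<psi> a (V\<psi> h) | a h. True}) = UNIV"
    unfolding min_stinespring_def min_stinespring_ops_def by blast+
  note A1 = sA[unfolded srep_def, THEN conjunct1]
  note A2 = sA[unfolded srep_def, THEN conjunct2, THEN conjunct1]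
  note A3 = sA[unfolded srep_def, THEN conjunct2, THEN conjunct2, THEN conjunct1]
  note A4 = sA[unfolded srep_def, THEN conjunct2, THEN conjunct2, THEN conjunct2, THEN conjunct1]
  note A5 = sA[unfolded srep_def, THEN conjunct2, THEN conjunct2, THEN conjunct2, THEN conjunct2]
  note B1 = sB[unfolded srep_def, THEN conjunct1]
  note B2 = sB[unfolded srep_def, THEN conjunct2, THEN conjunct1]
  note B3 = sB[unfolded srep_def, THEN conjunct2, THEN conjunct2, THEN conjunct1]
  note B4 = sB[unfolded srep_def, THEN conjunct2, THEN conjunct2, THEN conjunct2, THEN conjunct1]
  note B5 = sB[unfolded srep_def, THEN conjunct2, THEN conjunct2, THEN conjunct2, THEN conjunct2]
  note X1 = assms(6)[unfolded bimodule_rep_def, THEN conjunct2, THEN conjunct2, THEN conjunct2, THEN conjunct2, THEN conjunct1]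
  note X2 = assms(6)[unfolded bimodule_rep_def, THEN conjunct2, THEN conjunct2, THEN conjunct2, THEN conjunct2, THEN conjunct2, THEN conjunct1]
  note X3 = assms(6)[unfolded bimodule_rep_def, THEN conjunct2, THEN conjunct2, THEN conjunct2, THEN conjunct2, THEN conjunct2, THEN conjunct2, THEN conjunct1]
  note X4 = assms(6)[unfolded bimodule_rep_def, THEN conjunct2, THEN conjunct2, THEN conjunct2, THEN conjunct2, THEN conjunct2, THEN conjunct2, THEN conjunct2, THEN conjunct1]
  note X5 = assms(6)[unfolded bimodule_rep_def, THEN conjunct2, THEN conjunct2, THEN conjunct2, THEN conjunct2, THEN conjunct2, THEN conjunct2, THEN conjunct2, THEN conjunct2, THEN conjunct1]
  note E1 = assms(5)[unfolded equivalence_bimodule_def, THEN conjunct2, THEN conjunct2, THEN conjunct2, THEN conjunct2, THEN conjunct2, THEN conjunct2, THEN conjunct2, THEN conjunct2, THEN conjunct2, THEN conjunct2, THEN conjunct2, THEN conjunct2, THEN conjunct2, THEN conjunct2, THEN conjunct2, THEN conjunct2, THEN conjunct2, THEN conjunct2, THEN conjunct2, THEN conjunct2, THEN conjunct2, THEN conjunct1]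
  note E2 = assms(5)[unfolded equivalence_bimodule_def, THEN conjunct2, THEN conjunct2, THEN conjunct2, THEN conjunct2, THEN conjunct2, THEN conjunct2, THEN conjunct2, THEN conjunct2, THEN conjunct2, THEN conjunct2, THEN conjunct2, THEN conjunct2, THEN conjunct2, THEN conjunct2, THEN conjunct2, THEN conjunct2, THEN conjunct2, THEN conjunct2, THEN conjunct2, THEN conjunct2, THEN conjunct2, THEN conjunct2, THEN conjunct1]
  note E3 = assms(5)[unfolded equivalence_bimodule_def, THEN conjunct2, THEN conjunct2, THEN conjunct2, THEN conjunct2, THEN conjunct2, THEN conjunct2, THEN conjunct2, THEN conjunct2, THEN conjunct2, THEN conjunct2, THEN conjunct2, THEN conjunct2, THEN conjunct2, THEN conjunct1]
  note E4 = assms(5)[unfolded equivalence_bimodule_def, THEN conjunct2, THEN conjunct2, THEN conjunct2, THEN conjunct2, THEN conjunct2, THEN conjunct2, THEN conjunct2, THEN conjunct2, THEN conjunct2, THEN conjunct2, THEN conjunct2, THEN conjunct2, THEN conjunct2, THEN conjunct2, THEN conjunct1]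
  note A1 = A1[rule_format] and A2 = A2[rule_format] and A3 = A3[rule_format]
    and A4 = A4[rule_format] and A5 = A5[rule_format]
  note B1 = B1[rule_format] and B2 = B2[rule_format] and B3 = B3[rule_format]
    and B4 = B4[rule_format] and B5 = B5[rule_format]
  note X1 = X1[rule_format] and X2 = X2[rule_format] and X3 = X3[rule_format]
    and X4 = X4[rule_format] and X5 = X5[rule_format]
  note E1 = E1[rule_format] and E2 = E2[rule_format] and E3 = E3[rule_format]
    and E4 = E4[rule_format]
  have A2p: "\<And>a b h. \<pi>\<phi> (a + b) h = \<pi>\<phi> a h + \<pi>\<phi> b h" using A2 by simp
  have B2p: "\<And>a b h. \<pi>\<psi> (a + b) h = \<pi>\<psi> a h + \<pi>\<psi> b h" using B2 by simp
  have X2p: "\<And>x y k. \<pi>X (x + y) k = \<pi>X x k + \<pi>X y k" using X2 by simp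
  have A4p: "\<And>a b h. \<pi>\<phi> (a * b) h = \<pi>\<phi> a (\<pi>\<phi> b h)" using A4 by simp
  have B4p: "\<And>a b h. \<pi>\<psi> (a * b) h = \<pi>\<psi> a (\<pi>\<psi> b h)" using B4 by simp
  have XX: "\<And>u v h. \<pi>X u (adj (\<pi>X v) h) = \<pi>\<phi> (lip u v) h" using X4 by (metis comp_apply)
  have XY: "\<And>u v k. adj (\<pi>X u) (\<pi>X v k) = \<pi>\<psi> (rip u v) k" using X5 by (metis comp_apply)
  have selfA: "\<And>x. sstar (lip x x) = lip x x" using E2 by metis
  have selfB: "\<And>x. sstar (rip x x) = rip x x" using E4 by metis
  have L1: "\<pi>X (lact a x) = (\<lambda>k. \<pi>\<phi> a (\<pi>X x k))" for a x
  proof -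
    define D where "D = (\<lambda>k. \<pi>X (lact a x) k - \<pi>\<phi> a (\<pi>X x k))"
    have cD: "cblin D" unfolding D_def by (rule cblin_diff[OF X1 cblin_comp[OF A1 X1]])
    have adjD: "adj D = (\<lambda>h. adj (\<pi>X (lact a x)) h - adj (\<pi>X x) (\<pi>\<phi> (sstar a) h))"
      unfolding D_def by (simp add: adj_diff[OF X1 cblin_comp[OF A1 X1]] adj_comp[OF A1 X1] A5)
    define m where "m = a * lip x x * sstar a"
    have lxax: "lip x (lact a x) = lip x x * sstar a"
    proof -
      have "lip x (lact a x) = sstar (lip (lact a x) x)" by (rule E2)
      also have "\<dots> = sstar (a * lip x x)" by (simp only: E1)
      also have "\<dots> = lip x x * sstar a" by (simp only: sstar_mult selfA)
      finally show ?thesis .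
    qed
    have e1: "lip (lact a x) (lact a x) = m" by (simp add: E1 lxax m_def mult.assoc)
    have e2: "lip (lact a x) x * sstar a = m" by (simp add: E1 m_def)
    have e3: "a * lip x (lact a x) = m" by (simp add: lxax m_def mult.assoc)
    have e4: "a * (lip x x * sstar a) = m" by (simp add: m_def mult.assoc)
    have "D (adj D h) = 0" for h
    proof -
      have "D (adj D h) = \<pi>X (lact a x) (adj (\<pi>X (lact a x)) h - adj (\<pi>X x) (\<pi>\<phi> (sstar a) h))
          - \<pi>\<phi> a (\<pi>X x (adj (\<pi>X (lact a x)) h - adj (\<pi>X x) (\<pi>\<phi> (sstar a) h)))"
        unfolding adjD by (simp add: D_def)
      also have "\<dots> = \<pi>\<phi> (lip (lact a x) (lact a x)) h - \<pi>\<phi> (lip (lact a x) x * sstar a) h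
          - (\<pi>\<phi> (a * lip x (lact a x)) h - \<pi>\<phi> (a * (lip x x * sstar a)) h)"
        by (simp add: cblinD(4)[OF X1] cblinD(4)[OF A1] XX A4p)
      also have "\<dots> = 0" by (simp add: e1 e2 e3 e4)
      finally show ?thesis .
    qed
    then have "D = (\<lambda>k. 0)" by (rule zero_from_adj_right[OF cD])
    then show ?thesis unfolding D_def by (simp add: fun_eq_iff)
  qed
  have L2: "\<pi>X (ract x b) = (\<lambda>k. \<pi>X x (\<pi>\<psi> b k))" for x b
  proof -
    define D where "D = (\<lambda>k. \<pi>X (ract x b) k - \<pi>X x (\<pi>\<psi> b k))"
    have cD: "cblin D" unfolding D_def by (rule cblin_diff[OF X1 cblin_comp[OF X1 B1]])
    have adjD: "adj D = (\<lambda>h. adj (\<pi>X (ract x b)) h - \<pi>\<psi> (sstar b) (adj (\<pi>X x) h))"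
      unfolding D_def by (simp add: adj_diff[OF X1 cblin_comp[OF X1 B1]] adj_comp[OF X1 B1] B5)
    define m where "m = sstar b * rip x x * b"
    have rxbx: "rip (ract x b) x = sstar b * rip x x"
    proof -
      have "rip (ract x b) x = sstar (rip x (ract x b))" by (rule E4)
      also have "\<dots> = sstar (rip x x * b)" by (simp only: E3)
      also have "\<dots> = sstar b * rip x x" by (simp only: sstar_mult selfB)
      finally show ?thesis .
    qed
    have e1: "rip (ract x b) (ract x b) = m" by (simp add: E3 rxbx m_def mult.assoc)
    have e2: "rip (ract x b) x * b = m" by (simp add: rxbx m_def)
    have e3: "sstar b * rip x (ract x b) = m" by (simp add: E3 m_def mult.assoc)
    have e4: "sstar b * (rip x x * b) = m" by (simp add: m_def mult.assoc)
    have "adj D (D k) = 0" for k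
    proof -
      have "adj D (D k) = adj (\<pi>X (ract x b)) (\<pi>X (ract x b) k - \<pi>X x (\<pi>\<psi> b k))
          - \<pi>\<psi> (sstar b) (adj (\<pi>X x) (\<pi>X (ract x b) k - \<pi>X x (\<pi>\<psi> b k)))"
        unfolding adjD by (simp add: D_def)
      also have "\<dots> = \<pi>\<psi> (rip (ract x b) (ract x b)) k - \<pi>\<psi> (rip (ract x b) x * b) k
          - (\<pi>\<psi> (sstar b * rip x (ract x b)) k - \<pi>\<psi> (sstar b * (rip x x * b)) k)"
        by (simp add: cblinD(4)[OF cblin_adj[OF X1]] cblinD(4)[OF B1] XY B4p)
      also have "\<dots> = 0" by (simp add: e1 e2 e3 e4)
      finally show ?thesis .
    qed
    then have "D = (\<lambda>k. 0)" by (rule zero_from_adj_left[OF cD])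
    then show ?thesis unfolding D_def by (simp add: fun_eq_iff)
  qed
  have AL: "adj (\<pi>X (lact a y)) = (\<lambda>h. adj (\<pi>X y) (\<pi>\<phi> (sstar a) h))" for a y
    by (simp add: L1 adj_comp[OF A1 X1] A5)
  have AR: "adj (\<pi>X (ract y b)) = (\<lambda>h. \<pi>\<psi> (sstar b) (adj (\<pi>X y) h))" for y b
    by (simp add: L2 adj_comp[OF X1 B1] B5)
  have AY: "adj (\<pi>X (lact a y + ract z b)) h
      = adj (\<pi>X y) (\<pi>\<phi> (sstar a) h) + \<pi>\<psi> (sstar b) (adj (\<pi>X z) h)" for a y z b h
  proof -
    have "adj (\<pi>X (lact a y + ract z b)) = (\<lambda>h. adj (\<pi>X (lact a y)) h + adj (\<pi>X (ract z b)) h)"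
      by (simp only: X2 adj_add[OF X1 X1])
    thus ?thesis by (simp add: AL AR)
  qed
  have L1p: "\<And>a x k. \<pi>X (lact a x) k = \<pi>\<phi> a (\<pi>X x k)" by (simp add: L1)
  have L2p: "\<And>x b k. \<pi>X (ract x b) k = \<pi>X x (\<pi>\<psi> b k)" by (simp add: L2)
  have rho: "\<And>a x y b. \<rho> (a, x, y, b) = blk (\<pi>\<phi> a) (\<pi>X x) (adj (\<pi>X y)) (\<pi>\<psi> b)"
    by (rule ext) (simp add: assms(7) blk_def)
  have X0: "\<pi>X 0 = (\<lambda>k. 0)"
  proof
    fix k have "\<pi>X 0 k = \<pi>X 0 k + \<pi>X 0 k" using X2p[of 0 0 k] by simp
    thus "\<pi>X 0 k = 0" by simp
  qed
  have B0: "\<pi>\<psi> 0 = (\<lambda>k. 0)"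
  proof
    fix k have "\<pi>\<psi> 0 k = \<pi>\<psi> 0 k + \<pi>\<psi> 0 k" using B2p[of 0 0 k] by simp
    thus "\<pi>\<psi> 0 k = 0" by simp
  qed
  have A0: "\<pi>\<phi> 0 = (\<lambda>k. 0)"
  proof
    fix k have "\<pi>\<phi> 0 k = \<pi>\<phi> 0 k + \<pi>\<phi> 0 k" using A2p[of 0 0 k] by simp
    thus "\<pi>\<phi> 0 k = 0" by simp
  qed
  have srep: "srep link_add link_scal (link_mult lact ract lip rip) link_star \<rho>"
    unfolding srep_def
  proof (intro conjI allI)
    fix l :: "('a, 'x, 'b) linking"
    obtain a x y b where l: "l = (a, x, y, b)" by (cases l) auto
    show "cblin (\<rho> l)" unfolding l rho by (intro cblin_blk A1 X1 B1 cblin_adj)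
    show "\<rho> (link_star l) = adj (\<rho> l)"
      unfolding l by (simp add: link_star_def rho adj_blk[OF A1 X1 cblin_adj[OF X1] B1] adj_adj[OF X1] A5 B5)
    fix c :: complex
    show "\<rho> (link_scal c l) = (\<lambda>h. scaleC c (\<rho> l h))"
      unfolding l by (simp add: link_scal_def rho blk_def fun_eq_iff A3 B3 X3 adj_scale[OF X1]
        scaleC_prod_def scaleC_add_right)
  next
    fix l m :: "('a, 'x, 'b) linking"
    obtain a1 x1 y1 b1 where l: "l = (a1, x1, y1, b1)" by (cases l) auto
    obtain a2 x2 y2 b2 where m: "m = (a2, x2, y2, b2)" by (cases m) auto
    show "\<rho> (link_add l m) = (\<lambda>h. \<rho> l h + \<rho> m h)"
      unfolding l m by (simp add: link_add_def rho blk_def fun_eq_iff A2 B2 X2 adj_add[OF X1 X1])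
    show "\<rho> (link_mult lact ract lip rip l m) = \<rho> l \<circ> \<rho> m"
      unfolding l m by (simp add: link_mult_def rho blk_def fun_eq_iff A2p B2p X2p A4p B4p AY L1p L2p
        cblinD(1)[OF A1] cblinD(1)[OF B1] cblinD(1)[OF X1] cblinD(1)[OF cblin_adj[OF X1]] XX XY
        sstar_sstar)
  qed
  have W: "W = blk V\<phi> (\<lambda>k. 0) (\<lambda>h. 0) V\<psi>" by (rule ext) (simp add: assms(8) blk_def)
  have cW: "cblin W" unfolding W by (intro cblin_blk VA VB cblin_zero)
  have cl: "closure (cspan {\<rho> l (W h) | l h. True}) = UNIV"
  proof (rule cspan_prod[OF _ _ clA clB])
    show "(\<lambda>p. (p, 0::'kp)) ` {\<pi>\<phi> a (V\<phi> h) | a h. True} \<subseteq> {\<rho> l (W h) | l h. True}"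
    proof
      fix z assume "z \<in> (\<lambda>p. (p, 0::'kp)) ` {\<pi>\<phi> a (V\<phi> h) | a h. True}"
      then obtain a h where z: "z = (\<pi>\<phi> a (V\<phi> h), 0)" by blast
      have "\<rho> (a, 0, 0, 0) (W (h, 0)) = z"
        by (simp add: z assms(7) assms(8) X0 B0 adj_zero)
      thus "z \<in> {\<rho> l (W h) | l h. True}" by blast
    qed
    show "(\<lambda>q. (0::'hp, q)) ` {\<pi>\<psi> b (V\<psi> k) | b k. True} \<subseteq> {\<rho> l (W h) | l h. True}"
    proof
      fix z assume "z \<in> (\<lambda>q. (0::'hp, q)) ` {\<pi>\<psi> b (V\<psi> k) | b k. True}"
      then obtain b k where z: "z = (0, \<pi>\<psi> b (V\<psi> k))" by blast
      have "\<rho> (0, 0, 0, b) (W (0, k)) = z"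
        by (simp add: z assms(7) assms(8) X0 A0 adj_zero)
      thus "z \<in> {\<rho> l (W h) | l h. True}" by blast
    qed
  qed
  show ?thesis unfolding min_stinespring_ops_def
    using srep cW cl assms(9) by blast
qed


end
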